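(* For every $\varphi\in\mathcal{L}_{AIL}$, the closure $cl(\varphi)$ is finite.
   Context: $\mathcal{L}_{AIL}$ over a countable set $\mathcal{P}$ of atoms and finite set $\mathcal{G}$ of agents: $\varphi::=p\mid\neg\varphi\mid\varphi\wedge\varphi\mid A_i\varphi\mid I_i\varphi\mid E_i\varphi\mid[\approx]_i\varphi\mid[\circ^+]_i\varphi$. $cl(\varphi)$ is the smallest set such that: (1) $\varphi\in cl(\varphi)$; (2) if $\psi\in cl(\varphi)$ then all subformulas of $\psi$ are in $cl(\varphi)$; (3) if $\psi\in cl(\varphi)$ and $\psi$ is not a negation, then $\neg\psi\in cl(\varphi)$; (4) if $A_i\psi\in cl(\varphi)$ then $A_i\chi\in cl(\varphi)$ for every subformula $\chi$ of $\psi$; (5) if $A_i\psi\in cl(\varphi)$ then $I_iA_i\psi$, $I_i\neg A_i\psi$, and $[\approx]_ip$ are in $cl(\varphi)$ for every atom $p$ that is a subformula of $\psi$; (6) if $I_i\psi\in cl(\varphi)$ and $\psi$ is of neither the form $I_i\chi$ nor $\neg I_i\chi$, then $I_iI_i\psi,I_i\neg I_i\psi\in cl(\varphi)$; (7) if $[\approx]_i\psi\in cl(\varphi)$ and $\psi$ is of neither the form $[\approx]_i\chi$ nor $\neg[\approx]_i\chi$, then $[\approx]_i[\approx]_i\psi,[\approx]_i\neg[\approx]_i\psi\in cl(\varphi)$; (8) if $[\circ^+]_i\psi\in cl(\varphi)$ then $[\approx]_iI_i[\circ^+]_i\psi\in cl(\varphi)$; (9) if $E_i\psi\in cl(\varphi)$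 then $A_i\psi,[\circ^+]_i\psi\in cl(\varphi)$. *)

theory Defs
  imports Main
begin

datatype ('p, 'g) fm =
    Atom 'p
  | Neg "('p, 'g) fm"
  | Conj "('p, 'g) fm" "('p, 'g) fm"
  | Aw 'g "('p, 'g) fm"
  | Imp 'g "('p, 'g) fm"
  | Ex 'g "('p, 'g) fm"
  | Sim 'g "('p, 'g) fm"     (* [\<approx>]_i *)
  | Circ 'g "('p, 'g) fm"    (* [\<circ>^+]_i *)

fun subformulas :: "('p, 'g) fm \<Rightarrow> ('p, 'g) fm set" where
  "subformulas (Atom p) = {Atom p}"
| "subformulas (Neg a) = insert (Neg a) (subformulas a)"
| "subformulas (Conj a b) = insert (Conj a b) (subformulas a \<union> subformulas b)"
| "subformulas (Aw i a) = insert (Aw i a) (subformulas a)"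
| "subformulas (Imp i a) = insert (Imp i a) (subformulas a)"
| "subformulas (Ex i a) = insert (Ex i a) (subformulas a)"
| "subformulas (Sim i a) = insert (Sim i a) (subformulas a)"
| "subformulas (Circ i a) = insert (Circ i a) (subformulas a)"

fun is_neg :: "('p, 'g) fm \<Rightarrow> bool" where
  "is_neg (Neg _) = True"
| "is_neg _ = False"

inductive_set cl :: "('p, 'g) fm \<Rightarrow> ('p, 'g) fm set" for \<phi> :: "('p, 'g) fm" where
  c1: "\<phi> \<in> cl \<phi>"
| c2: "\<psi> \<in> cl \<phi> \<Longrightarrow> \<chi> \<in> subformulas \<psi> \<Longrightarrow> \<chi> \<in> cl \<phi>"
| c3: "\<psi> \<in> cl \<phi> \<Longrightarrow> \<not> is_neg \<psi> \<Longrightarrow> Neg \<psi> \<in> cl \<phi>"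
| c4: "Aw i \<psi> \<in> cl \<phi> \<Longrightarrow> \<chi> \<in> subformulas \<psi> \<Longrightarrow> Aw i \<chi> \<in> cl \<phi>"
| c5a: "Aw i \<psi> \<in> cl \<phi> \<Longrightarrow> Imp i (Aw i \<psi>) \<in> cl \<phi>"
| c5b: "Aw i \<psi> \<in> cl \<phi> \<Longrightarrow> Imp i (Neg (Aw i \<psi>)) \<in> cl \<phi>"
| c5c: "Aw i \<psi> \<in> cl \<phi> \<Longrightarrow> Atom p \<in> subformulas \<psi> \<Longrightarrow> Sim i (Atom p) \<in> cl \<phi>"
| c6a: "Imp i \<psi> \<in> cl \<phi> \<Longrightarrow> (\<nexists>\<chi>. \<psi> = Imp i \<chi> \<or> \<psi> = Neg (Imp i \<chi>)) \<Longrightarrow> Imp i (Imp i \<psi>) \<in> cl \<phi>"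
| c6b: "Imp i \<psi> \<in> cl \<phi> \<Longrightarrow> (\<nexists>\<chi>. \<psi> = Imp i \<chi> \<or> \<psi> = Neg (Imp i \<chi>)) \<Longrightarrow> Imp i (Neg (Imp i \<psi>)) \<in> cl \<phi>"
| c7a: "Sim i \<psi> \<in> cl \<phi> \<Longrightarrow> (\<nexists>\<chi>. \<psi> = Sim i \<chi> \<or> \<psi> = Neg (Sim i \<chi>)) \<Longrightarrow> Sim i (Sim i \<psi>) \<in> cl \<phi>"
| c7b: "Sim i \<psi> \<in> cl \<phi> \<Longrightarrow> (\<nexists>\<chi>. \<psi> = Sim i \<chi> \<or> \<psi> = Neg (Sim i \<chi>)) \<Longrightarrow> Sim i (Neg (Sim i \<psi>)) \<in> cl \<phi>"
| c8: "Circ i \<psi> \<in> cl \<phi> \<Longrightarrow> Sim i (Imp i (Circ i \<psi>)) \<in> cl \<phi>"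
| c9a: "Ex i \<psi> \<in> cl \<phi> \<Longrightarrow> Aw i \<psi> \<in> cl \<phi>"
| c9b: "Ex i \<psi> \<in> cl \<phi> \<Longrightarrow> Circ i \<psi> \<in> cl \<phi>"

end

theory Submission
  imports Defs
begin

lemma sub_self: "\<psi> \<in> subformulas \<psi>"
  by (cases \<psi>) auto

lemma sub_trans: "\<chi> \<in> subformulas \<psi> \<Longrightarrow> subformulas \<chi> \<subseteq> subformulas \<psi>"
  by (induction \<psi>) auto

lemma sub_finite: "finite (subformulas \<psi>)"
  by (induction \<psi>) auto

fun atoms :: "('p, 'g) fm \<Rightarrow> 'p set" where
  "atoms (Atom p) = {p}"
| "atoms (Neg a) = atoms a"
| "atoms (Conj a b) = atoms a \<union> atoms b"
| "atoms (Aw i a) = atoms a"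
| "atoms (Imp i a) = atoms a"
| "atoms (Ex i a) = atoms a"
| "atoms (Sim i a) = atoms a"
| "atoms (Circ i a) = atoms a"

lemma atoms_finite: "finite (atoms \<psi>)"
  by (induction \<psi>) auto

lemma atoms_sub: "Atom p \<in> subformulas \<psi> \<longleftrightarrow> p \<in> atoms \<psi>"
  by (induction \<psi>) auto

fun stepE :: "('p, 'g) fm \<Rightarrow> ('p, 'g) fm set" where
  "stepE (Ex i a) = {Aw i a, Circ i a}"
| "stepE _ = {}"

fun stepA :: "('p, 'g) fm \<Rightarrow> ('p, 'g) fm set" where
  "stepA (Aw i a) = Aw i ` subformulas a"
| "stepA _ = {}"

fun step1 :: "('p, 'g) fm \<Rightarrow> ('p, 'g) fm set" where
  "step1 (Aw i a) = {Imp i (Aw i a), Imp i (Neg (Aw i a)), Neg (Aw i a)}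
      \<union> (\<lambda>p. Sim i (Atom p)) ` atoms a"
| "step1 (Circ i a) = {Sim i (Imp i (Circ i a)), Imp i (Circ i a)}"
| "step1 _ = {}"

fun step2 :: "('p, 'g) fm \<Rightarrow> ('p, 'g) fm set" where
  "step2 (Imp i a) = {Imp i (Imp i a), Imp i (Neg (Imp i a)), Neg (Imp i a)}"
| "step2 (Sim i a) = {Sim i (Sim i a), Sim i (Neg (Sim i a)), Neg (Sim i a)}"
| "step2 _ = {}"

definition "D0 \<phi> = subformulas \<phi>"
definition "DE \<phi> = D0 \<phi> \<union> \<Union>(stepE ` D0 \<phi>)"
definition "DD \<phi> = DE \<phi> \<union> \<Union>(stepA ` DE \<phi>)"
definition "L1 \<phi> = DD \<phi> \<union> \<Union>(step1 ` DD \<phi>)"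
definition "L2 \<phi> = L1 \<phi> \<union> \<Union>(step2 ` L1 \<phi>)"
definition "L3 \<phi> = L2 \<phi> \<union> Neg ` L2 \<phi>"

lemma fin_L3: "finite (L3 \<phi>)"
proof -
  have a: "finite (stepE x)" "finite (stepA x)" "finite (step1 x)" "finite (step2 x)" for x :: "('p,'g) fm"
    by (cases x; simp add: sub_finite atoms_finite)+
  show ?thesis
    unfolding L3_def L2_def L1_def DD_def DE_def D0_def
    by (simp add: a sub_finite)
qed

lemma D0_sub: "y \<in> D0 \<phi> \<Longrightarrow> \<chi> \<in> subformulas y \<Longrightarrow> \<chi> \<in> D0 \<phi>"
  unfolding D0_def using sub_trans by blast

lemma DE_sub: "y \<in> DE \<phi> \<Longrightarrow> \<chi> \<in> subformulas y \<Longrightarrow> \<chi> \<in> DE \<phi>"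
proof -
  assume y: "y \<in> DE \<phi>" and c: "\<chi> \<in> subformulas y"
  show ?thesis
  proof (cases "y \<in> D0 \<phi>")
    case True then show ?thesis using D0_sub c unfolding DE_def by blast
  next
    case False
    then obtain z where z: "z \<in> D0 \<phi>" "y \<in> stepE z" using y unfolding DE_def by blast
    then obtain i a where za: "z = Ex i a" by (cases z) auto
    have "a \<in> subformulas z" using za sub_self by auto
    then have "subformulas a \<subseteq> D0 \<phi>" using z D0_sub by blast
    have "\<chi> = y \<or> \<chi> \<in> subformulas a" using c z za by auto
    then show ?thesis using y \<open>subformulas a \<subseteq> D0 \<phi>\<close> unfolding DE_def by blast
  qed
qed

lemma DD_sub: "y \<in> DD \<phi> \<Longrightarrow> \<chi> \<in> subformulas y \<Longrightarrow> \<chi> \<in> DD \<phi>"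
proof -
  assume y: "y \<in> DD \<phi>" and c: "\<chi> \<in> subformulas y"
  show ?thesis
  proof (cases "y \<in> DE \<phi>")
    case True then show ?thesis using DE_sub c unfolding DD_def by blast
  next
    case False
    then obtain z where z: "z \<in> DE \<phi>" "y \<in> stepA z" using y unfolding DD_def by blast
    then obtain i a where za: "z = Aw i a" by (cases z) auto
    then obtain b where yb: "y = Aw i b" "b \<in> subformulas a" using z by auto
    have "subformulas a \<subseteq> DE \<phi>" using z za DE_sub sub_self
      by (metis insert_subset subformulas.simps(4) subsetI)
    then have "subformulas b \<subseteq> DE \<phi>" using yb sub_trans by blast
    then have "\<chi> = y \<or> \<chi> \<in> DE \<phi>" using c yb by auto
    then show ?thesis using y unfolding DD_def by auto
  qed
qed

lemma DD_Aw: "Aw i \<psi> \<in> DD \<phi> \<Longrightarrow> \<chi> \<in> subformulas \<psi> \<Longrightarrow> Aw i \<chi> \<in> DD \<phi>"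
proof -
  assume y: "Aw i \<psi> \<in> DD \<phi>" and c: "\<chi> \<in> subformulas \<psi>"
  show ?thesis
  proof (cases "Aw i \<psi> \<in> DE \<phi>")
    case True then show ?thesis using c unfolding DD_def
      by (metis UN_iff UnI2 image_eqI stepA.simps(1))
  next
    case False
    then obtain z where z: "z \<in> DE \<phi>" "Aw i \<psi> \<in> stepA z" using y unfolding DD_def by blast
    then obtain a where za: "z = Aw i a" "\<psi> \<in> subformulas a" by (cases z) auto
    then have "\<chi> \<in> subformulas a" using c sub_trans by blast
    then have "Aw i \<chi> \<in> stepA z" using za by simp
    then show ?thesis using z unfolding DD_def by blast
  qed
qed

lemma DD_Ex: "Ex i \<psi> \<in> DD \<phi> \<Longrightarrow> Aw i \<psi> \<in> DD \<phi> \<and> Circ i \<psi> \<in> DD \<phi>"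
proof -
  assume a: "Ex i \<psi> \<in> DD \<phi>"
  have "Ex i \<psi> \<in> D0 \<phi>"
  proof (rule ccontr)
    assume n: "Ex i \<psi> \<notin> D0 \<phi>"
    have s1: "Ex i \<psi> \<notin> stepE x" for x by (cases x) auto
    have s2: "Ex i \<psi> \<notin> stepA x" for x by (cases x) auto
    show False using a n s1 s2 unfolding DD_def DE_def by blast
  qed
  moreover have "Aw i \<psi> \<in> stepE (Ex i \<psi>)" "Circ i \<psi> \<in> stepE (Ex i \<psi>)" by auto
  ultimately show ?thesis unfolding DD_def DE_def by blast
qed

lemma L1_cases: "x \<in> L1 \<phi> \<Longrightarrow> x \<in> DD \<phi> \<or> (\<exists>y\<in>DD \<phi>. x \<in> step1 y)"
  unfolding L1_def by auto

lemma L3_cases: "x \<in> L3 \<phi> \<Longrightarrow> x \<in> L1 \<phi> \<or> (\<exists>y\<in>L1 \<phi>. x \<in> step2 y) \<or> (\<exists>z\<in>L2 \<phi>. x = Neg z)"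
  unfolding L3_def L2_def by auto

lemma L1_L3: "x \<in> L1 \<phi> \<Longrightarrow> x \<in> L3 \<phi>" unfolding L3_def L2_def by auto
lemma DD_L3: "x \<in> DD \<phi> \<Longrightarrow> x \<in> L3 \<phi>" unfolding L3_def L2_def L1_def by auto
lemma step1_L3: "y \<in> DD \<phi> \<Longrightarrow> x \<in> step1 y \<Longrightarrow> x \<in> L3 \<phi>"
  unfolding L3_def L2_def L1_def by auto
lemma step2_L3: "y \<in> L1 \<phi> \<Longrightarrow> x \<in> step2 y \<Longrightarrow> x \<in> L3 \<phi>"
  unfolding L3_def L2_def by auto
lemma Neg_L3: "x \<in> L2 \<phi> \<Longrightarrow> Neg x \<in> L3 \<phi>" unfolding L3_def by auto
lemma L1_L2: "x \<in> L1 \<phi> \<Longrightarrow> x \<in> L2 \<phi>" unfolding L2_def by auto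

lemma L3_shape: "x \<in> L3 \<phi> \<Longrightarrow> x \<in> DD \<phi> \<or> (\<exists>i a. x = Imp i a \<or> x = Sim i a) \<or> (\<exists>a. x = Neg a)"
proof -
  have s1: "x \<in> step1 y \<Longrightarrow> (\<exists>i a. x = Imp i a \<or> x = Sim i a) \<or> (\<exists>a. x = Neg a)" for x y
    by (cases y) auto
  have s2: "x \<in> step2 y \<Longrightarrow> (\<exists>i a. x = Imp i a \<or> x = Sim i a) \<or> (\<exists>a. x = Neg a)" for x y
    by (cases y) auto
  assume "x \<in> L3 \<phi>"
  then show ?thesis using L3_cases[of x \<phi>] L1_cases[of x \<phi>] s1 s2 by blast
qed

lemma L1_sub: "y \<in> L1 \<phi> \<Longrightarrow> \<chi> \<in> subformulas y \<Longrightarrow> \<chi> \<in> L3 \<phi>"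
proof -
  assume y: "y \<in> L1 \<phi>" and c: "\<chi> \<in> subformulas y"
  from L1_cases[OF y] show ?thesis
  proof
    assume "y \<in> DD \<phi>" then show ?thesis using DD_sub c DD_L3 by blast
  next
    assume "\<exists>z\<in>DD \<phi>. y \<in> step1 z"
    then obtain z where z: "z \<in> DD \<phi>" "y \<in> step1 z" by blast
    have zs: "\<And>w. w \<in> subformulas z \<Longrightarrow> w \<in> L3 \<phi>" using z DD_sub DD_L3 by blast
    show ?thesis
    proof (cases z)
      case (Aw i a)
      have n: "Neg (Aw i a) \<in> L3 \<phi>" by (rule step1_L3[OF z(1)]) (simp add: Aw)
      have yy: "y \<in> L3 \<phi>" using y L1_L3 by blast
      show ?thesis using Aw z c zs n yy by (auto simp: atoms_sub)
    next
      case (Circ i a)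
      have n: "Imp i (Circ i a) \<in> L3 \<phi>" by (rule step1_L3[OF z(1)]) (simp add: Circ)
      have yy: "y \<in> L3 \<phi>" using y L1_L3 by blast
      show ?thesis using Circ z c zs n yy by auto
    qed (use z in auto)
  qed
qed

lemma L3_sub: "y \<in> L3 \<phi> \<Longrightarrow> \<chi> \<in> subformulas y \<Longrightarrow> \<chi> \<in> L3 \<phi>"
proof -
  have L2s: "\<chi> \<in> L3 \<phi>" if y: "y \<in> L2 \<phi>" and c: "\<chi> \<in> subformulas y" for y \<chi>
  proof (cases "y \<in> L1 \<phi>")
    case True then show ?thesis using L1_sub c by blast
  next
    case False
    then obtain z where z: "z \<in> L1 \<phi>" "y \<in> step2 z" using y unfolding L2_def by blast
    have zs: "\<And>w. w \<in> subformulas z \<Longrightarrow> w \<in> L3 \<phi>" using z L1_sub by blast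
    have zz: "z \<in> L2 \<phi>" using z L1_L2 by blast
    show ?thesis
    proof (cases z)
      case (Imp i a)
      then show ?thesis using z c zs Neg_L3[OF zz] step2_L3[OF z] by auto
    next
      case (Sim i a)
      then show ?thesis using z c zs Neg_L3[OF zz] step2_L3[OF z] by auto
    qed (use z in auto)
  qed
  assume y: "y \<in> L3 \<phi>" and c: "\<chi> \<in> subformulas y"
  show ?thesis
  proof (cases "y \<in> L2 \<phi>")
    case True then show ?thesis using L2s c by blast
  next
    case False
    then obtain z where "z \<in> L2 \<phi>" "y = Neg z" using y unfolding L3_def by blast
    then show ?thesis using L2s c y by auto
  qed
qed

lemma L3_Imp: "Imp i \<psi> \<in> L3 \<phi> \<Longrightarrow> (\<nexists>\<chi>. \<psi> = Imp i \<chi> \<or> \<psi> = Neg (Imp i \<chi>)) \<Longrightarrow> Imp i \<psi> \<in> L1 \<phi>"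
proof -
  assume a: "Imp i \<psi> \<in> L3 \<phi>" and n: "\<nexists>\<chi>. \<psi> = Imp i \<chi> \<or> \<psi> = Neg (Imp i \<chi>)"
  have s: "Imp i \<psi> \<notin> step2 y" for y using n by (cases y) auto
  show ?thesis using L3_cases[OF a] s by auto
qed

lemma L3_Sim: "Sim i \<psi> \<in> L3 \<phi> \<Longrightarrow> (\<nexists>\<chi>. \<psi> = Sim i \<chi> \<or> \<psi> = Neg (Sim i \<chi>)) \<Longrightarrow> Sim i \<psi> \<in> L1 \<phi>"
proof -
  assume a: "Sim i \<psi> \<in> L3 \<phi>" and n: "\<nexists>\<chi>. \<psi> = Sim i \<chi> \<or> \<psi> = Neg (Sim i \<chi>)"
  have s: "Sim i \<psi> \<notin> step2 y" for y using n by (cases y) auto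
  show ?thesis using L3_cases[OF a] s by auto
qed

lemma cl_L3: "x \<in> cl \<phi> \<Longrightarrow> x \<in> L3 \<phi>"
proof (induction rule: cl.induct)
  case c1
  have "\<phi> \<in> DD \<phi>" unfolding DD_def DE_def D0_def using sub_self by blast
  then show ?case using DD_L3 by blast
next
  case (c2 \<psi> \<chi>)
  then show ?case using L3_sub by blast
next
  case (c3 \<psi>)
  have "\<psi> \<in> L2 \<phi>" using c3 unfolding L3_def by auto
  then show ?case by (rule Neg_L3)
next
  case (c4 i \<psi> \<chi>)
  have "Aw i \<psi> \<in> DD \<phi>"
    using L3_shape[OF c4.IH] by auto
  then show ?case by (rule DD_L3[OF DD_Aw]) fact
next
  case (c5a i \<psi>)
  have "Aw i \<psi> \<in> DD \<phi>"
    using L3_shape[OF c5a.IH] by auto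
  then show ?case by (rule step1_L3) simp
next
  case (c5b i \<psi>)
  have "Aw i \<psi> \<in> DD \<phi>"
    using L3_shape[OF c5b.IH] by auto
  then show ?case by (rule step1_L3) simp
next
  case (c5c i \<psi> p)
  have "Aw i \<psi> \<in> DD \<phi>"
    using L3_shape[OF c5c.IH] by auto
  then show ?case by (rule step1_L3) (use c5c in \<open>simp add: atoms_sub\<close>)
next
  case (c6a i \<psi>)
  have "Imp i \<psi> \<in> L1 \<phi>"
    by (rule L3_Imp[OF c6a.IH]) fact
  then show ?case by (rule step2_L3) simp
next
  case (c6b i \<psi>)
  have "Imp i \<psi> \<in> L1 \<phi>"
    by (rule L3_Imp[OF c6b.IH]) fact
  then show ?case by (rule step2_L3) simp
next
  case (c7a i \<psi>)
  have "Sim i \<psi> \<in> L1 \<phi>"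
    by (rule L3_Sim[OF c7a.IH]) fact
  then show ?case by (rule step2_L3) simp
next
  case (c7b i \<psi>)
  have "Sim i \<psi> \<in> L1 \<phi>"
    by (rule L3_Sim[OF c7b.IH]) fact
  then show ?case by (rule step2_L3) simp
next
  case (c8 i \<psi>)
  have "Circ i \<psi> \<in> DD \<phi>"
    using L3_shape[OF c8.IH] by auto
  then show ?case by (rule step1_L3) simp
next
  case (c9a i \<psi>)
  have "Ex i \<psi> \<in> DD \<phi>"
    using L3_shape[OF c9a.IH] by auto
  then have "Aw i \<psi> \<in> DD \<phi> \<and> Circ i \<psi> \<in> DD \<phi>" by (rule DD_Ex)
  then show ?case using DD_L3 by blast
next
  case (c9b i \<psi>)
  have "Ex i \<psi> \<in> DD \<phi>"
    using L3_shape[OF c9b.IH] by auto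
  then have "Aw i \<psi> \<in> DD \<phi> \<and> Circ i \<psi> \<in> DD \<phi>" by (rule DD_Ex)
  then show ?case using DD_L3 by blast
qed

theorem lemma5:
  fixes \<phi> :: "('p, 'g::finite) fm"
  shows "finite (cl \<phi>)"
  using fin_L3 cl_L3 by (meson finite_subset subsetI)

end
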